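(* Let $d,H\in\mathbb{N}$ and $0\le a\le b\le1$. Consider an arbitrary sequence of cost functions $\ell_t:\mathcal{X}_{d,H,a,b}\to\mathbb{R}$ which are convex and $L$-Lipschitz with respect to $\|\cdot\|_{d,H}$. Then the iterates $z_t=(p_t,M_t^{[1:H]})$ of Lazy Mirror Descent on $\mathcal{X}_{d,H,a,b}$ with step size $\eta=\sqrt{2dH\ln(d)}/(L\sqrt T)$, regularizer $R_{d,H}$ and losses $\ell_1,\dots,\ell_T$ satisfy $$\sum_{t=1}^T\ell_t(p_t,M_t^{[1:H]})-\min_{(p,M^{[1:H]})\in\mathcal{X}_{d,H,a,b}}\sum_{t=1}^T\ell_t(p,M^{[1:H]})\le L\sqrt{32dH\ln(d)\cdot T}.$$ Moreover, with $\beta:=\sqrt{2dH\ln(d)}/\sqrt T$, for all $t\in[T-1]$ we have $\|p_t-p_{t+1}\|_1\le\beta$ and $\max_{h\in[H]}\|M_t^{[h]}-M_{t+1}^{[h]}\|_{1\to1}\le\beta$.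
   Context: $\Delta^d_a:=a\Delta^d$ (scaled probability simplex), $\mathbb{S}^d_a:=\{aM:M\text{ a }d\times d\text{ column-stochastic matrix}\}$, and $\mathcal{X}_{d,H,a,b}:=\bigcup_{a'\in[a,b]}\Delta^d_{a'}\times(\mathbb{S}^d_{a'})^H\subset\mathbb{R}^d\times(\mathbb{R}^{d\times d})^H\cong\mathbb{R}^{d+Hd^2}$. Norm: $\|(p,M^{[1:H]})\|_{d,H}^2:=\|p\|_1^2+\sum_{h=1}^H\sum_{j=1}^d\|M^{[h]}_{\cdot,j}\|_1^2$, where $M_{\cdot,j}$ is the $j$-th column; $\|M\|_{1\to1}:=\sup_{\|x\|_1=1}\|Mx\|_1$. For $v\in\mathbb{R}^d_{\ge0}$ with $\sum_jv_j\le1$, $v^c:=1-\sum_jv_j$ and $\mathrm{Ent}(v):=v^c\ln\frac1{v^c}+\sum_jv_j\ln\frac1{v_j}$; $R_{d,H}(p,M^{[1:H]}):=-\mathrm{Ent}(p)-\sum_{h=1}^H\sum_{j=1}^d\mathrm{Ent}(M^{[h]}_{\cdot,j})$. Lazy Mirror Descent outputs $z_t:=\arg\min_{z\in\mathcal{X}}\sum_{s=1}^{t-1}\langle z,\nabla\ell_s(z_s)\rangle+\frac1\eta R_{d,H}(z)$ at step $t$, then receives $\ell_t$. *)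

theory Defs
  imports "HOL-Analysis.Analysis"
begin

text \<open>The dimension d is the
  finite index type 'd (d = CARD('d)), the horizon H is the finite index type 'h
  (H = CARD('h)). A matrix M :: real^'d^'d has entry M $ i $ j in row i, column j.\<close>

type_synonym ('d, 'h) point = "(real^'d) \<times> ((real^'d^'d)^'h)"

definition l1norm :: "real^'d::finite \<Rightarrow> real" where
  "l1norm x = (\<Sum>i\<in>UNIV. \<bar>x $ i\<bar>)"

definition col :: "real^'d::finite^'d \<Rightarrow> 'd \<Rightarrow> real^'d" where
  "col M j = (\<chi> i. M $ i $ j)"

definition prob_simplex :: "(real^'d::finite) set" where
  "prob_simplex = {x. (\<forall>i. x $ i \<ge> 0) \<and> (\<Sum>i\<in>UNIV. x $ i) = 1}"

definition scaled_simplex :: "real \<Rightarrow> (real^'d) set" where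
  "scaled_simplex a = (\<lambda>x. a *\<^sub>R x) ` prob_simplex"

definition col_stochastic :: "(real^'d::finite^'d) set" where
  "col_stochastic = {M. \<forall>j. col M j \<in> prob_simplex}"

definition scaled_stochastic :: "real \<Rightarrow> (real^'d::finite^'d) set" where
  "scaled_stochastic a = (\<lambda>M. a *\<^sub>R M) ` col_stochastic"

definition Xdom :: "real \<Rightarrow> real \<Rightarrow> ('d::finite, 'h::finite) point set" where
  "Xdom a b = (\<Union>a'\<in>{a..b}. scaled_simplex a' \<times> {Ms. \<forall>h. Ms $ h \<in> scaled_stochastic a'})"

definition normdH :: "('d::finite, 'h::finite) point \<Rightarrow> real" where
  "normdH z = sqrt ((l1norm (fst z))\<^sup>2 + (\<Sum>h\<in>UNIV. \<Sum>j\<in>UNIV. (l1norm (col (snd z $ h) j))\<^sup>2))"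

definition opnorm11 :: "real^'d^'d \<Rightarrow> real" where
  "opnorm11 M = Sup {l1norm (M *v x) | x. l1norm x = 1}"

text \<open>Ent(v) = v^c ln(1/v^c) + sum_j v_j ln(1/v_j), with v^c = 1 - sum_j v_j
  (the convention 0 ln(1/0) = 0 holds automatically since 0 * _ = 0).\<close>
definition Ent :: "real^'d::finite \<Rightarrow> real" where
  "Ent v = (let vc = 1 - (\<Sum>j\<in>UNIV. v $ j) in
            vc * ln (1 / vc) + (\<Sum>j\<in>UNIV. v $ j * ln (1 / v $ j)))"

definition Rreg :: "('d::finite, 'h::finite) point \<Rightarrow> real" where
  "Rreg z = - Ent (fst z) - (\<Sum>h\<in>UNIV. \<Sum>j\<in>UNIV. Ent (col (snd z $ h) j))"

text \<open>Lazy Mirror Descent: z_t minimizes over X the function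
  z \<mapsto> sum_{s<t} <z, g_s> + (1/eta) R(z), where g_s is the (sub)gradient of l_s at z_s.\<close>
definition lazy_md_iterate ::
  "('d::finite, 'h::finite) point set \<Rightarrow> real \<Rightarrow> (nat \<Rightarrow> ('d, 'h) point) \<Rightarrow> nat \<Rightarrow> ('d::finite, 'h::finite) point \<Rightarrow> bool" where
  "lazy_md_iterate X \<eta> g t z \<longleftrightarrow> z \<in> X \<and>
     (\<forall>y\<in>X. (\<Sum>s\<in>{1..<t}. inner z (g s)) + (1 / \<eta>) * Rreg z
            \<le> (\<Sum>s\<in>{1..<t}. inner y (g s)) + (1 / \<eta>) * Rreg y)"

end

theory Submission imports Defs "HOL-Real_Asymp.Real_Asymp" begin

definition phi :: "real \<Rightarrow> real" where "phi x = x * ln x"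

lemma phi_cont: "continuous_on {0..} phi"
proof -
  have "continuous (at x within {0..}) phi" if "x \<ge> 0" for x
  proof (cases "x = 0")
    case True
    have "((\<lambda>x::real. x * ln x) \<longlongrightarrow> 0) (at_right 0)" by real_asymp
    then show ?thesis using True by (simp add: continuous_within at_within_Ici_at_right phi_def[abs_def])
  next
    case False
    then have "isCont phi x" using that unfolding phi_def by (auto intro!: continuous_intros)
    then show ?thesis by (simp add: continuous_at_imp_continuous_within)
  qed
  then show ?thesis by (simp add: continuous_on_eq_continuous_within)
qed

lemma lin_deriv: "((\<lambda>t. v + t * d) has_real_derivative d) (at t)"
  by (auto intro!: derivative_eq_intros)
lemma phi_d: "x > 0 \<Longrightarrow> (phi has_real_derivative ln x + 1) (at x)"
  unfolding phi_def[abs_def] by (auto intro!: derivative_eq_intros)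
lemma lnp1_d: "x > 0 \<Longrightarrow> ((\<lambda>x. ln x + 1) has_real_derivative 1 / x) (at x)"
  by (auto intro!: derivative_eq_intros simp: field_simps)
lemma phi_deriv1:
  assumes "v + t * d > 0"
  shows "((\<lambda>t. phi (v + t * d)) has_real_derivative d * (ln (v + t * d) + 1)) (at t)"
  using DERIV_chain2[OF phi_d[OF assms] lin_deriv] by (simp add: mult.commute)
lemma phi_deriv2:
  assumes "v + t * d > 0"
  shows "((\<lambda>t. d * (ln (v + t * d) + 1)) has_real_derivative d^2 / (v + t * d)) (at t)"
  using DERIV_cmult[OF DERIV_chain2[OF lnp1_d[OF assms] lin_deriv], of d] by (simp add: power2_eq_square)

lemma cs_bound:
  fixes d x :: "'i \<Rightarrow> real"
  assumes fin: "finite J" and xp: "\<And>i. i \<in> J \<Longrightarrow> x i > 0" and sx: "sum x J \<le> 1"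
  shows "(\<Sum>i\<in>J. \<bar>d i\<bar>)^2 \<le> (\<Sum>i\<in>J. (d i)^2 / x i)"
proof -
  define D where "D = (\<Sum>i\<in>J. \<bar>d i\<bar>)"
  have D0: "D \<ge> 0" unfolding D_def by (simp add: sum_nonneg)
  have t: "(d i)^2 / x i \<ge> 2 * D * \<bar>d i\<bar> - D^2 * x i" if "i \<in> J" for i
  proof -
    have xi: "x i > 0" using xp that .
    have "0 \<le> (\<bar>d i\<bar> - D * x i)^2" by simp
    hence "0 \<le> (d i)^2 - 2 * D * \<bar>d i\<bar> * x i + D^2 * (x i)^2"
      by (simp add: power2_eq_square algebra_simps)
    hence "2 * D * \<bar>d i\<bar> * x i - D^2 * (x i)^2 \<le> (d i)^2" by simp
    hence "(2 * D * \<bar>d i\<bar> - D^2 * x i) * x i \<le> (d i)^2" by (simp add: power2_eq_square algebra_simps)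
    thus ?thesis using xi by (simp add: pos_le_divide_eq)
  qed
  have "(\<Sum>i\<in>J. (d i)^2 / x i) \<ge> (\<Sum>i\<in>J. 2 * D * \<bar>d i\<bar> - D^2 * x i)"
    by (rule sum_mono) (use t in auto)
  also have "(\<Sum>i\<in>J. 2 * D * \<bar>d i\<bar> - D^2 * x i) = 2 * D * D - D^2 * sum x J"
    by (simp add: sum_subtractf sum_distrib_left D_def)
  also have "\<dots> \<ge> 2 * D * D - D^2"
    using sx D0 by (simp add: mult_left_le)
  finally show ?thesis by (simp add: D_def power2_eq_square)
qed

lemma negent_sc_J:
  fixes u v :: "'i \<Rightarrow> real"
  assumes fin: "finite I" and u0: "\<And>i. i\<in>I \<Longrightarrow> u i \<ge> 0" and v0: "\<And>i. i\<in>I \<Longrightarrow> v i \<ge> 0"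
    and su: "sum u I \<le> 1" and sv: "sum v I \<le> 1" and l: "0 < l" "l < 1"
    and J: "J = {i\<in>I. u i \<noteq> v i}"
  shows "(\<Sum>i\<in>J. phi (l * u i + (1-l) * v i)) \<le> l * (\<Sum>i\<in>J. phi (u i)) + (1-l) * (\<Sum>i\<in>J. phi (v i))
           - (1/2) * l * (1-l) * (\<Sum>i\<in>J. \<bar>u i - v i\<bar>)^2"
proof -
  define d where "d i = u i - v i" for i
  define D where "D = (\<Sum>i\<in>J. \<bar>d i\<bar>)"
  define x where "x i t = v i + t * d i" for i t
  have JI: "J \<subseteq> I" using J by auto
  have finJ: "finite J" using fin JI finite_subset by blast
  have pos: "x i t > 0" if "i \<in> J" "0 < t" "t < 1" for i t
  proof -
    have ne: "u i \<noteq> v i" and ii: "i \<in> I" using that J by auto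
    have "u i \<ge> 0" "v i \<ge> 0" using u0 v0 ii by auto
    show ?thesis
    proof (cases "u i > v i")
      case True
      then show ?thesis unfolding x_def d_def using that \<open>v i \<ge> 0\<close>
        by (smt (verit) mult_pos_pos)
    next
      case False
      then have "v i > u i" using ne by auto
      have "x i t = (1 - t) * v i + t * u i" unfolding x_def d_def by (simp add: algebra_simps)
      moreover have "(1 - t) * v i > 0" using \<open>v i > u i\<close> \<open>u i \<ge> 0\<close> that by simp
      moreover have "t * u i \<ge> 0" using \<open>u i \<ge> 0\<close> that by simp
      ultimately show ?thesis by simp
    qed
  qed
  have nonneg: "x i t \<ge> 0" if "i \<in> I" "0 \<le> t" "t \<le> 1" for i t
  proof -
    have "x i t = (1 - t) * v i + t * u i" unfolding x_def d_def by (simp add: algebra_simps)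
    thus ?thesis using u0 v0 that by simp
  qed
  have sumx: "sum (\<lambda>i. x i t) J \<le> 1" if "0 \<le> t" "t \<le> 1" for t
  proof -
    have "sum (\<lambda>i. x i t) J \<le> sum (\<lambda>i. x i t) I"
      by (rule sum_mono2[OF fin JI]) (use nonneg that in auto)
    also have "\<dots> = (1 - t) * sum v I + t * sum u I"
      unfolding x_def d_def by (simp add: sum.distrib sum_distrib_left algebra_simps sum_subtractf)
    also have "\<dots> \<le> (1 - t) * 1 + t * 1"
      by (rule add_mono; rule mult_left_mono) (use that su sv in auto)
    finally show ?thesis by simp
  qed
  define psi where "psi t = (\<Sum>i\<in>J. phi (x i t)) - D^2 / 2 * t^2" for t
  define psi' where "psi' t = (\<Sum>i\<in>J. d i * (ln (x i t) + 1)) - D^2 * t" for t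
  define psi'' where "psi'' t = (\<Sum>i\<in>J. (d i)^2 / x i t) - D^2" for t
  have der1: "(psi has_real_derivative psi' t) (at t)" if "0 < t" "t < 1" for t
  proof -
    have "((\<lambda>t. \<Sum>i\<in>J. phi (x i t)) has_real_derivative (\<Sum>i\<in>J. d i * (ln (x i t) + 1))) (at t)"
      unfolding x_def
      by (rule DERIV_sum) (rule phi_deriv1, use pos[OF _ that] in \<open>simp add: x_def\<close>)
    moreover have "((\<lambda>t. D^2 / 2 * t^2) has_real_derivative D^2 * t) (at t)"
      by (auto intro!: derivative_eq_intros)
    ultimately show ?thesis unfolding psi_def psi'_def by (rule DERIV_diff)
  qed
  have der2: "(psi' has_real_derivative psi'' t) (at t)" if "0 < t" "t < 1" for t
  proof -
    have "((\<lambda>t. \<Sum>i\<in>J. d i * (ln (x i t) + 1)) has_real_derivative (\<Sum>i\<in>J. (d i)^2 / x i t)) (at t)"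
      unfolding x_def
      by (rule DERIV_sum) (rule phi_deriv2, use pos[OF _ that] in \<open>simp add: x_def\<close>)
    moreover have "((\<lambda>t. D^2 * t) has_real_derivative D^2) (at t)"
      by (auto intro!: derivative_eq_intros)
    ultimately show ?thesis unfolding psi'_def psi''_def by (rule DERIV_diff)
  qed
  have pp: "psi'' t \<ge> 0" if "0 < t" "t < 1" for t
    unfolding psi''_def D_def
    using cs_bound[OF finJ, of "\<lambda>i. x i t" d] pos[OF _ that] sumx[of t] that by simp
  have cont: "continuous_on {0..1} psi"
  proof -
    have "continuous_on {0..1} (\<lambda>t. phi (x i t))" if "i \<in> J" for i
    proof (rule continuous_on_compose2[OF phi_cont])
      show "continuous_on {0..1} (\<lambda>t. x i t)" unfolding x_def by (intro continuous_intros)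
      show "(\<lambda>t. x i t) ` {0..1} \<subseteq> {0..}" using nonneg JI that by auto
    qed
    then show ?thesis unfolding psi_def by (intro continuous_intros) auto
  qed
  have dif: "psi differentiable (at y)" if "0 < y" "y < 1" for y
    using der1[OF that] real_differentiable_def by blast
  have c1: "continuous_on {0..l} psi" by (rule continuous_on_subset[OF cont]) (use l in auto)
  have c2: "continuous_on {l..1} psi" by (rule continuous_on_subset[OF cont]) (use l in auto)
  have "\<exists>l1 z. 0 < z \<and> z < l \<and> DERIV psi z :> l1 \<and> psi l - psi 0 = (l - 0) * l1"
    by (rule MVT[OF l(1) c1]) (rule dif, use l in auto)
  then obtain z1 l1 where z1: "0 < z1" "z1 < l" "DERIV psi z1 :> l1" "psi l - psi 0 = (l - 0) * l1"
    by blast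
  have "\<exists>l2 z. l < z \<and> z < 1 \<and> DERIV psi z :> l2 \<and> psi 1 - psi l = (1 - l) * l2"
    by (rule MVT[OF l(2) c2]) (rule dif, use l in auto)
  then obtain z2 l2 where z2: "l < z2" "z2 < 1" "DERIV psi z2 :> l2" "psi 1 - psi l = (1 - l) * l2"
    by blast
  have e1: "l1 = psi' z1" by (rule DERIV_unique[OF z1(3) der1]) (use z1 l in auto)
  have e2: "l2 = psi' z2" by (rule DERIV_unique[OF z2(3) der1]) (use z2 l in auto)
  have "\<exists>w. z1 < w \<and> w < z2 \<and> psi' z2 - psi' z1 = (z2 - z1) * psi'' w"
    by (rule MVT2) (use z1 z2 l in \<open>auto intro!: der2\<close>)
  then obtain w where w: "z1 < w" "w < z2" "psi' z2 - psi' z1 = (z2 - z1) * psi'' w" by blast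
  have "psi' z2 - psi' z1 \<ge> 0" using w pp[of w] z1 z2 by simp
  hence gap: "l * psi 1 + (1 - l) * psi 0 - psi l \<ge> 0"
  proof -
    have "l * psi 1 + (1 - l) * psi 0 - psi l = l * (psi 1 - psi l) - (1 - l) * (psi l - psi 0)"
      by (simp add: algebra_simps)
    also have "\<dots> = l * ((1 - l) * psi' z2) - (1 - l) * (l * psi' z1)"
    proof -
      have h1: "psi l - psi 0 = l * psi' z1" using z1(4) e1 by simp
      have h2: "psi 1 - psi l = (1 - l) * psi' z2" using z2(4) e2 by simp
      show ?thesis by (simp only: h1 h2)
    qed
    also have "\<dots> = l * (1 - l) * (psi' z2 - psi' z1)" by (simp add: algebra_simps)
    finally show ?thesis using \<open>psi' z2 - psi' z1 \<ge> 0\<close> l by simp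
  qed
  have x1: "x i 1 = u i" and x0: "x i 0 = v i" and xl: "x i l = l * u i + (1 - l) * v i" for i
    unfolding x_def d_def by (simp_all add: algebra_simps)
  define P where "P = (\<Sum>i\<in>J. phi (u i))"
  define Q where "Q = (\<Sum>i\<in>J. phi (v i))"
  define M where "M = (\<Sum>i\<in>J. phi (l * u i + (1-l) * v i))"
  have p1: "psi 1 = P - D^2/2" and p0: "psi 0 = Q" and pl: "psi l = M - D^2/2 * l^2"
    unfolding psi_def x1 x0 xl P_def Q_def M_def by simp_all
  have "l * psi 1 + (1 - l) * psi 0 - psi l = l * P + (1 - l) * Q - M - 1/2 * l * (1 - l) * D^2"
    unfolding p1 p0 pl by (simp add: field_simps power2_eq_square)
  with gap have "M \<le> l * P + (1 - l) * Q - 1/2 * l * (1 - l) * D^2" by linarith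
  then show ?thesis unfolding M_def P_def Q_def D_def d_def .
qed

lemma negent_sc:
  fixes u v :: "'i \<Rightarrow> real"
  assumes fin: "finite I" and u0: "\<And>i. i\<in>I \<Longrightarrow> u i \<ge> 0" and v0: "\<And>i. i\<in>I \<Longrightarrow> v i \<ge> 0"
    and su: "sum u I \<le> 1" and sv: "sum v I \<le> 1" and l: "0 \<le> l" "l \<le> 1"
  shows "(\<Sum>i\<in>I. phi (l * u i + (1-l) * v i)) \<le> l * (\<Sum>i\<in>I. phi (u i)) + (1-l) * (\<Sum>i\<in>I. phi (v i))
           - (1/2) * l * (1-l) * (\<Sum>i\<in>I. \<bar>u i - v i\<bar>)^2"
proof (cases "l = 0 \<or> l = 1")
  case True
  then show ?thesis by auto
next
  case False
  hence l': "0 < l" "l < 1" using l by auto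
  define J where "J = {i\<in>I. u i \<noteq> v i}"
  have JI: "J \<subseteq> I" unfolding J_def by auto
  have K: "(\<Sum>i\<in>J. phi (l * u i + (1-l) * v i)) \<le> l * (\<Sum>i\<in>J. phi (u i)) + (1-l) * (\<Sum>i\<in>J. phi (v i))
           - (1/2) * l * (1-l) * (\<Sum>i\<in>J. \<bar>u i - v i\<bar>)^2"
    by (rule negent_sc_J[OF fin u0 v0 su sv l' J_def])
  have eqv: "u i = v i" if "i \<in> I - J" for i using that unfolding J_def by auto
  have s1: "(\<Sum>i\<in>I. f i) = (\<Sum>i\<in>J. f i) + (\<Sum>i\<in>I-J. f i)" for f :: "'i \<Rightarrow> real"
    using sum.subset_diff[OF JI fin] by (simp add: add.commute)
  have a1: "(\<Sum>i\<in>I-J. phi (l * u i + (1-l) * v i)) = l * (\<Sum>i\<in>I-J. phi (u i)) + (1-l) * (\<Sum>i\<in>I-J. phi (v i))"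
  proof -
    have "(\<Sum>i\<in>I-J. phi (l * u i + (1-l) * v i)) = (\<Sum>i\<in>I-J. phi (v i))"
      by (rule sum.cong) (auto simp: eqv algebra_simps)
    moreover have "(\<Sum>i\<in>I-J. phi (u i)) = (\<Sum>i\<in>I-J. phi (v i))"
      by (rule sum.cong) (auto simp: eqv)
    ultimately show ?thesis by (simp add: algebra_simps)
  qed
  have a2: "(\<Sum>i\<in>I-J. \<bar>u i - v i\<bar>) = 0" by (rule sum.neutral) (auto simp: eqv)
  show ?thesis using K a1 a2 unfolding s1[of "\<lambda>i. phi (l * u i + (1-l) * v i)"] s1[of "\<lambda>i. phi (u i)"]
      s1[of "\<lambda>i. phi (v i)"] s1[of "\<lambda>i. \<bar>u i - v i\<bar>"] by (simp add: algebra_simps)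
qed

definition ent1 :: "real \<Rightarrow> real" where "ent1 x = x * ln (1 / x)"

lemma ent1_phi: "x \<ge> 0 \<Longrightarrow> ent1 x = - phi x"
  unfolding ent1_def phi_def by (cases "x = 0") (auto simp: ln_div)

lemma entropy_le:
  fixes x :: "'i \<Rightarrow> real"
  assumes fin: "finite I" and x0: "\<And>i. i \<in> I \<Longrightarrow> x i \<ge> 0" and sx: "sum x I = 1"
  shows "(\<Sum>i\<in>I. ent1 (x i)) \<le> ln (card I)"
proof -
  have ne: "I \<noteq> {}" using sx by auto
  define n where "n = real (card I)"
  have n0: "n > 0" unfolding n_def using fin ne by (simp add: card_gt_0_iff)
  have t: "ent1 (x i) - x i * ln n \<le> 1 / n - x i" if "i \<in> I" for i
  proof (cases "x i = 0")
    case True then show ?thesis using n0 by (simp add: ent1_def)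
  next
    case False
    hence xp: "x i > 0" using x0 that by (simp add: less_le)
    have "ent1 (x i) - x i * ln n = x i * ln (1 / (n * x i))"
      unfolding ent1_def using xp n0 by (simp add: ln_div ln_mult algebra_simps)
    also have "\<dots> \<le> x i * (1 / (n * x i) - 1)"
      by (rule mult_left_mono[OF ln_le_minus_one]) (use xp n0 in auto)
    also have "\<dots> = 1 / n - x i" using xp n0 by (simp add: field_simps)
    finally show ?thesis .
  qed
  have "(\<Sum>i\<in>I. ent1 (x i) - x i * ln n) \<le> (\<Sum>i\<in>I. 1 / n - x i)" by (rule sum_mono) (rule t)
  moreover have "(\<Sum>i\<in>I. ent1 (x i) - x i * ln n) = (\<Sum>i\<in>I. ent1 (x i)) - ln n * sum x I"
    by (simp add: sum_subtractf sum_distrib_left mult.commute)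
  moreover have "(\<Sum>i\<in>I. 1 / n - x i) = card I * (1/n) - sum x I"
    by (simp add: sum_subtractf)
  ultimately have "(\<Sum>i\<in>I. ent1 (x i)) - ln n * sum x I \<le> card I * (1/n) - sum x I" by simp
  thus ?thesis using sx n0 unfolding n_def by simp
qed

lemma entropy_ge:
  fixes x :: "'i \<Rightarrow> real"
  assumes x0: "\<And>i. i \<in> I \<Longrightarrow> x i \<ge> 0" and x1: "\<And>i. i \<in> I \<Longrightarrow> x i \<le> 1"
  shows "(\<Sum>i\<in>I. ent1 (x i)) \<ge> 0"
proof (rule sum_nonneg)
  fix i assume "i \<in> I"
  then have a: "0 \<le> x i" "x i \<le> 1" using x0 x1 by auto
  show "0 \<le> ent1 (x i)"
  proof (cases "x i = 0")
    case True then show ?thesis by (simp add: ent1_def)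
  next
    case False
    then have "x i > 0" using a by simp
    then have "ln (x i) \<le> 0" using a by simp
    then have "x i * ln (x i) \<le> 0" using a mult_nonneg_nonpos by blast
    then show ?thesis using \<open>x i > 0\<close> by (simp add: ent1_def ln_div)
  qed
qed

definition ext :: "real^'d::finite \<Rightarrow> 'd option \<Rightarrow> real" where
  "ext v k = (case k of None \<Rightarrow> 1 - (\<Sum>j\<in>UNIV. v $ j) | Some j \<Rightarrow> v $ j)"

lemma sum_option: "(\<Sum>k\<in>(UNIV::'d::finite option set). f k) = f None + (\<Sum>j\<in>UNIV. f (Some j))"
proof -
  have "(UNIV::'d option set) = insert None (range Some)" by (rule UNIV_option_conv)
  have "sum f (insert None (range Some)) = f None + sum f (range Some)" by (subst sum.insert) auto
  also have "sum f (range Some) = (\<Sum>j\<in>UNIV. f (Some j))" by (simp add: sum.reindex)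
  finally show ?thesis using \<open>(UNIV::'d option set) = _\<close> by simp
qed

lemma sum_ext: "(\<Sum>k\<in>UNIV. ext v k) = 1"
  by (simp add: sum_option ext_def)

lemma Ent_ext: "Ent v = (\<Sum>k\<in>UNIV. ent1 (ext v k))"
  by (simp add: sum_option ext_def Ent_def ent1_def Let_def)

lemma ext_comb: "ext (l *\<^sub>R v + (1 - l) *\<^sub>R w) k = l * ext v k + (1 - l) * ext w k"
proof (cases k)
  case None
  have "(\<Sum>j\<in>UNIV. (l *\<^sub>R v + (1 - l) *\<^sub>R w) $ j) = l * (\<Sum>j\<in>UNIV. v $ j) + (1 - l) * (\<Sum>j\<in>UNIV. w $ j)"
    by (simp add: sum.distrib sum_distrib_left)
  then show ?thesis using None by (simp add: ext_def algebra_simps)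
qed (simp add: ext_def)

lemma ext_nonneg:
  assumes "\<And>j. v $ j \<ge> 0" "(\<Sum>j\<in>UNIV. v $ j) \<le> 1"
  shows "ext v k \<ge> 0" "ext v k \<le> 1"
proof -
  show "ext v k \<ge> 0" using assms by (cases k) (auto simp: ext_def)
  show "ext v k \<le> 1"
  proof (cases k)
    case None then show ?thesis using assms by (simp add: ext_def sum_nonneg)
  next
    case (Some j)
    have "v $ j \<le> (\<Sum>j\<in>UNIV. v $ j)"
      by (rule member_le_sum) (use assms in auto)
    then show ?thesis using Some assms by (simp add: ext_def)
  qed
qed

lemma ext_l1: "l1norm (v - w) \<le> (\<Sum>k\<in>UNIV. \<bar>ext v k - ext w k\<bar>)"
  by (simp add: sum_option ext_def l1norm_def)

lemma Ent_bounds: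
  fixes v :: "real^'d::finite"
  assumes "\<And>j. v $ j \<ge> 0" "(\<Sum>j\<in>UNIV. v $ j) \<le> 1"
  shows "0 \<le> Ent v" "Ent v \<le> ln (CARD('d) + 1)"
proof -
  show "0 \<le> Ent v" unfolding Ent_ext by (rule entropy_ge) (use ext_nonneg[OF assms] in auto)
  have "Ent v \<le> ln (card (UNIV :: 'd option set))" unfolding Ent_ext
    by (rule entropy_le) (use ext_nonneg[OF assms] sum_ext in auto)
  then show "Ent v \<le> ln (CARD('d) + 1)" by (simp add: card_UNIV_option)
qed

lemma Ent_sc:
  fixes v w :: "real^'d::finite"
  assumes v: "\<And>j. v $ j \<ge> 0" "(\<Sum>j\<in>UNIV. v $ j) \<le> 1"
    and w: "\<And>j. w $ j \<ge> 0" "(\<Sum>j\<in>UNIV. w $ j) \<le> 1"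
    and l: "0 \<le> l" "l \<le> 1"
  shows "- Ent (l *\<^sub>R v + (1 - l) *\<^sub>R w) \<le> l * (- Ent v) + (1 - l) * (- Ent w) - (1/2) * l * (1 - l) * (l1norm (v - w))^2"
proof -
  have ev: "- Ent v = (\<Sum>k\<in>UNIV. phi (ext v k))"
    if "\<And>j. v $ j \<ge> 0" "(\<Sum>j\<in>UNIV. v $ j) \<le> 1" for v :: "real^'d"
    unfolding Ent_ext using ext_nonneg[OF that] by (simp add: ent1_phi sum_negf)
  define c where "c = l *\<^sub>R v + (1 - l) *\<^sub>R w"
  have c: "\<And>j. c $ j \<ge> 0" "(\<Sum>j\<in>UNIV. c $ j) \<le> 1"
  proof -
    show "\<And>j. c $ j \<ge> 0" unfolding c_def using v w l by simp
    have "(\<Sum>j\<in>UNIV. c $ j) = l * (\<Sum>j\<in>UNIV. v $ j) + (1 - l) * (\<Sum>j\<in>UNIV. w $ j)"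
      unfolding c_def by (simp add: sum.distrib sum_distrib_left)
    also have "\<dots> \<le> l * 1 + (1 - l) * 1"
      by (rule add_mono; rule mult_left_mono) (use v w l in auto)
    finally show "(\<Sum>j\<in>UNIV. c $ j) \<le> 1" by simp
  qed
  have main: "(\<Sum>k\<in>UNIV. phi (l * ext v k + (1-l) * ext w k)) \<le> l * (\<Sum>k\<in>UNIV. phi (ext v k)) + (1-l) * (\<Sum>k\<in>UNIV. phi (ext w k))
           - (1/2) * l * (1-l) * (\<Sum>k\<in>UNIV. \<bar>ext v k - ext w k\<bar>)^2"
    by (rule negent_sc) (use ext_nonneg[OF v] ext_nonneg[OF w] l in \<open>auto simp: sum_ext\<close>)
  have "(l1norm (v - w))^2 \<le> (\<Sum>k\<in>UNIV. \<bar>ext v k - ext w k\<bar>)^2"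
    by (rule power_mono[OF ext_l1]) (simp add: l1norm_def sum_nonneg)
  hence "(1/2) * l * (1-l) * (l1norm (v - w))^2 \<le> (1/2) * l * (1-l) * (\<Sum>k\<in>UNIV. \<bar>ext v k - ext w k\<bar>)^2"
    by (rule mult_left_mono) (use l in auto)
  moreover have "- Ent c = (\<Sum>k\<in>UNIV. phi (l * ext v k + (1-l) * ext w k))"
    using ev[OF c] by (simp add: c_def ext_comb)
  moreover have "l * (- Ent v) = l * (\<Sum>k\<in>UNIV. phi (ext v k))" using ev[OF v] by simp
  moreover have "(1 - l) * (- Ent w) = (1 - l) * (\<Sum>k\<in>UNIV. phi (ext w k))" using ev[OF w] by simp
  ultimately show ?thesis using main unfolding c_def by linarith
qed

lemma Xdom_iff:
  assumes a0: "0 \<le> a"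
  shows "z \<in> Xdom a b \<longleftrightarrow> (\<exists>a'\<in>{a..b}. (\<forall>i. fst z $ i \<ge> 0) \<and> (\<Sum>i\<in>UNIV. fst z $ i) = a' \<and>
           (\<forall>h j. (\<forall>i. snd z $ h $ i $ j \<ge> 0) \<and> (\<Sum>i\<in>UNIV. snd z $ h $ i $ j) = a'))"
proof
  assume "z \<in> Xdom a b"
  then obtain a' x Ms where a': "a' \<in> {a..b}" and z: "z = (a' *\<^sub>R x, Ms)" and x: "x \<in> prob_simplex"
    and Ms: "\<forall>h. Ms $ h \<in> scaled_stochastic a'"
    unfolding Xdom_def scaled_simplex_def by blast
  have a'0: "a' \<ge> 0" using a' a0 by auto
  have 1: "\<forall>i. fst z $ i \<ge> 0" using x a'0 z by (auto simp: prob_simplex_def)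
  have 2: "(\<Sum>i\<in>UNIV. fst z $ i) = a'" using x z by (simp add: prob_simplex_def sum_distrib_left[symmetric])
  have 3: "(\<forall>i. snd z $ h $ i $ j \<ge> 0) \<and> (\<Sum>i\<in>UNIV. snd z $ h $ i $ j) = a'" for h j
  proof -
    obtain M where M: "Ms $ h = a' *\<^sub>R M" "M \<in> col_stochastic" using Ms unfolding scaled_stochastic_def by auto
    have "col M j \<in> prob_simplex" using M(2) unfolding col_stochastic_def by auto
    then have "(\<forall>i. M $ i $ j \<ge> 0) \<and> (\<Sum>i\<in>UNIV. M $ i $ j) = 1" unfolding prob_simplex_def col_def by auto
    then show ?thesis using M(1) z a'0 by (simp add: sum_distrib_left[symmetric])
  qed
  show "\<exists>a'\<in>{a..b}. (\<forall>i. fst z $ i \<ge> 0) \<and> (\<Sum>i\<in>UNIV. fst z $ i) = a' \<and>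
           (\<forall>h j. (\<forall>i. snd z $ h $ i $ j \<ge> 0) \<and> (\<Sum>i\<in>UNIV. snd z $ h $ i $ j) = a')"
    using a' 1 2 3 by blast
next
  assume "\<exists>a'\<in>{a..b}. (\<forall>i. fst z $ i \<ge> 0) \<and> (\<Sum>i\<in>UNIV. fst z $ i) = a' \<and>
           (\<forall>h j. (\<forall>i. snd z $ h $ i $ j \<ge> 0) \<and> (\<Sum>i\<in>UNIV. snd z $ h $ i $ j) = a')"
  then obtain a' where a': "a' \<in> {a..b}" and p0: "\<forall>i. fst z $ i \<ge> 0" and ps: "(\<Sum>i\<in>UNIV. fst z $ i) = a'"
    and M0: "\<And>h j i. snd z $ h $ i $ j \<ge> 0" and Ms: "\<And>h j. (\<Sum>i\<in>UNIV. snd z $ h $ i $ j) = a'" by blast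
  define e :: "real^'a" where "e = (\<chi> i. if i = undefined then 1 else 0)"
  define E :: "real^'a^'a" where "E = (\<chi> i j. if i = undefined then 1 else 0)"
  have e: "e \<in> prob_simplex" unfolding e_def prob_simplex_def by simp
  have E: "E \<in> col_stochastic" unfolding E_def col_stochastic_def prob_simplex_def col_def by simp
  show "z \<in> Xdom a b"
  proof (cases "a' = 0")
    case True
    have p: "fst z = 0 *\<^sub>R e"
    proof -
      have "\<forall>i\<in>UNIV. fst z $ i = 0" using sum_nonneg_eq_0_iff[of UNIV "\<lambda>i. fst z $ i"] p0 ps True by simp
      then show ?thesis by (simp add: vec_eq_iff)
    qed
    have M: "snd z $ h = 0 *\<^sub>R E" for h
    proof -
      have "\<forall>i\<in>UNIV. snd z $ h $ i $ j = 0" for j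
        using sum_nonneg_eq_0_iff[of UNIV "\<lambda>i. snd z $ h $ i $ j"] M0 Ms True by simp
      then show ?thesis by (simp add: vec_eq_iff)
    qed
    have "fst z \<in> scaled_simplex a'" using p e True unfolding scaled_simplex_def by auto
    moreover have "snd z $ h \<in> scaled_stochastic a'" for h using M E True unfolding scaled_stochastic_def by auto
    ultimately show ?thesis unfolding Xdom_def using a' by (auto intro!: bexI[of _ a'] simp: mem_Times_iff)
  next
    case False
    define x where "x = (1 / a') *\<^sub>R fst z"
    have x: "x \<in> prob_simplex" unfolding prob_simplex_def x_def using p0 ps a' False a0
      by (auto simp: sum_distrib_left[symmetric] sum_divide_distrib[symmetric])
    have "fst z = a' *\<^sub>R x" unfolding x_def using False by simp
    hence "fst z \<in> scaled_simplex a'" using x unfolding scaled_simplex_def by auto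
    moreover have "snd z $ h \<in> scaled_stochastic a'" for h
    proof -
      define M where "M = (1 / a') *\<^sub>R (snd z $ h)"
      have "M \<in> col_stochastic" unfolding col_stochastic_def prob_simplex_def col_def M_def
        using M0 Ms a' False a0 by (auto simp: sum_distrib_left[symmetric] sum_divide_distrib[symmetric])
      moreover have "snd z $ h = a' *\<^sub>R M" unfolding M_def using False by simp
      ultimately show ?thesis unfolding scaled_stochastic_def by auto
    qed
    ultimately show ?thesis unfolding Xdom_def using a' by (auto intro!: bexI[of _ a'] simp: mem_Times_iff)
  qed
qed

lemma Xdom_blocks:
  assumes a0: "0 \<le> a" and b1: "b \<le> 1" and z: "z \<in> Xdom a b"
  shows "\<And>i. fst z $ i \<ge> 0" "(\<Sum>i\<in>UNIV. fst z $ i) \<le> 1"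
    "\<And>i. col (snd z $ h) j $ i \<ge> 0" "(\<Sum>i\<in>UNIV. col (snd z $ h) j $ i) \<le> 1"
  using z unfolding Xdom_iff[OF a0] col_def using b1 by auto

lemma Xdom_convex:
  assumes a0: "0 \<le> a" and x: "x \<in> Xdom a b" and y: "y \<in> Xdom a b" and l: "0 \<le> l" "l \<le> 1"
  shows "l *\<^sub>R x + (1 - l) *\<^sub>R y \<in> Xdom a b"
proof -
  obtain a1 where a1: "a1 \<in> {a..b}" "\<forall>i. fst x $ i \<ge> 0" "(\<Sum>i\<in>UNIV. fst x $ i) = a1"
    "\<And>h j i. snd x $ h $ i $ j \<ge> 0" "\<And>h j. (\<Sum>i\<in>UNIV. snd x $ h $ i $ j) = a1"
    using x unfolding Xdom_iff[OF a0] by blast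
  obtain a2 where a2: "a2 \<in> {a..b}" "\<forall>i. fst y $ i \<ge> 0" "(\<Sum>i\<in>UNIV. fst y $ i) = a2"
    "\<And>h j i. snd y $ h $ i $ j \<ge> 0" "\<And>h j. (\<Sum>i\<in>UNIV. snd y $ h $ i $ j) = a2"
    using y unfolding Xdom_iff[OF a0] by blast
  have c: "l * a1 + (1 - l) * a2 \<in> {a..b}"
  proof -
    have "l * a + (1 - l) * a \<le> l * a1 + (1 - l) * a2"
      by (rule add_mono; rule mult_left_mono) (use a1 a2 l in auto)
    moreover have "l * a1 + (1 - l) * a2 \<le> l * b + (1 - l) * b"
      by (rule add_mono; rule mult_left_mono) (use a1 a2 l in auto)
    ultimately show ?thesis by (simp add: algebra_simps)
  qed
  show ?thesis unfolding Xdom_iff[OF a0]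
    using a1 a2 l
    by (intro bexI[OF _ c]) (auto simp: sum.distrib sum_distrib_left[symmetric])
qed

lemma col_comb: "col (l *\<^sub>R M + m *\<^sub>R N) j = l *\<^sub>R col M j + m *\<^sub>R col N j"
  by (simp add: col_def vec_eq_iff)

lemma col_diff: "col (M - N) j = col M j - col N j"
  by (simp add: col_def vec_eq_iff)

lemma sum_comb_le:
  fixes f p q r :: "'i \<Rightarrow> real"
  assumes "\<And>i. i \<in> A \<Longrightarrow> f i \<le> l * p i + m * q i - k * r i"
  shows "sum f A \<le> l * sum p A + m * sum q A - k * sum r A"
proof -
  have "sum f A \<le> (\<Sum>i\<in>A. l * p i + m * q i - k * r i)" by (rule sum_mono) (rule assms)
  also have "\<dots> = l * sum p A + m * sum q A - k * sum r A"
    by (simp add: sum.distrib sum_subtractf sum_distrib_left)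
  finally show ?thesis .
qed

lemma normdH_sq: "(normdH z)^2 = (l1norm (fst z))\<^sup>2 + (\<Sum>h\<in>UNIV. \<Sum>j\<in>UNIV. (l1norm (col (snd z $ h) j))\<^sup>2)"
  unfolding normdH_def by (simp add: sum_nonneg)

lemma Rreg_sc:
  assumes a0: "0 \<le> a" and b1: "b \<le> 1" and x: "x \<in> Xdom a b" and y: "y \<in> Xdom a b" and l: "0 \<le> l" "l \<le> 1"
  shows "Rreg (l *\<^sub>R x + (1 - l) *\<^sub>R y) \<le> l * Rreg x + (1 - l) * Rreg y - (1/2 * l * (1 - l)) * (normdH (x - y))^2"
proof -
  note bx = Xdom_blocks[OF a0 b1 x] and byy = Xdom_blocks[OF a0 b1 y]
  have 1: "- Ent (fst (l *\<^sub>R x + (1 - l) *\<^sub>R y)) \<le> l * (- Ent (fst x)) + (1 - l) * (- Ent (fst y))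
           - (1/2 * l * (1 - l)) * (l1norm (fst x - fst y))^2"
    using Ent_sc[of "fst x" "fst y" l] bx byy l by simp
  have 2: "(\<Sum>h\<in>UNIV. \<Sum>j\<in>UNIV. - Ent (col (snd (l *\<^sub>R x + (1 - l) *\<^sub>R y) $ h) j)) \<le>
      l * (\<Sum>h\<in>UNIV. \<Sum>j\<in>UNIV. - Ent (col (snd x $ h) j)) + (1 - l) * (\<Sum>h\<in>UNIV. \<Sum>j\<in>UNIV. - Ent (col (snd y $ h) j))
      - (1/2 * l * (1 - l)) * (\<Sum>h\<in>UNIV. \<Sum>j\<in>UNIV. (l1norm (col (snd x $ h) j - col (snd y $ h) j))^2)"
  proof (rule sum_comb_le, rule sum_comb_le)
    fix h j
    show "- Ent (col (snd (l *\<^sub>R x + (1 - l) *\<^sub>R y) $ h) j) \<le> l * (- Ent (col (snd x $ h) j)) + (1 - l) * (- Ent (col (snd y $ h) j))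
           - (1/2 * l * (1 - l)) * (l1norm (col (snd x $ h) j - col (snd y $ h) j))^2"
      using Ent_sc[of "col (snd x $ h) j" "col (snd y $ h) j" l] Xdom_blocks(3,4)[OF a0 b1 x, of h j]
        Xdom_blocks(3,4)[OF a0 b1 y, of h j] l by (simp add: col_comb)
  qed
  have n: "(normdH (x - y))^2 = (l1norm (fst x - fst y))\<^sup>2 + (\<Sum>h\<in>UNIV. \<Sum>j\<in>UNIV. (l1norm (col (snd x $ h) j - col (snd y $ h) j))\<^sup>2)"
    unfolding normdH_sq by (simp add: col_diff)
  show ?thesis unfolding Rreg_def n using 1 2 by (simp add: sum_negf algebra_simps)
qed

lemma min_sc:
  assumes a0: "0 \<le> a" and b1: "b \<le> 1" and eta: "\<eta> > 0" and x: "x \<in> Xdom a b" and y: "y \<in> Xdom a b"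
    and min: "\<And>y. y \<in> Xdom a b \<Longrightarrow> inner x c + (1/\<eta>) * Rreg x \<le> inner y c + (1/\<eta>) * Rreg y"
  shows "inner x c + (1/\<eta>) * Rreg x + (normdH (y - x))^2 / (2*\<eta>) \<le> inner y c + (1/\<eta>) * Rreg y"
proof -
  define G where "G z = inner z c + (1/\<eta>) * Rreg z" for z
  define Q where "Q = (normdH (y - x))^2 / (2*\<eta>)"
  have Q0: "Q \<ge> 0" unfolding Q_def using eta by simp
  have key: "G y - G x \<ge> (1 - t) * Q" if t: "0 < t" "t \<le> 1" for t
  proof -
    have yt: "t *\<^sub>R y + (1-t) *\<^sub>R x \<in> Xdom a b" by (rule Xdom_convex[OF a0 y x]) (use t in auto)
    have R: "Rreg (t *\<^sub>R y + (1-t) *\<^sub>R x) \<le> t * Rreg y + (1-t) * Rreg x - (1/2 * t * (1-t)) * (normdH (y - x))^2"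
      by (rule Rreg_sc[OF a0 b1 y x]) (use t in auto)
    have R': "(1/\<eta>) * Rreg (t *\<^sub>R y + (1-t) *\<^sub>R x) \<le> (1/\<eta>) * (t * Rreg y + (1-t) * Rreg x - (1/2 * t * (1-t)) * (normdH (y - x))^2)"
      by (rule mult_left_mono[OF R]) (use eta in simp)
    have lin: "inner (t *\<^sub>R y + (1-t) *\<^sub>R x) c = t * inner y c + (1-t) * inner x c" by (simp add: inner_add_left)
    have "G x \<le> G (t *\<^sub>R y + (1-t) *\<^sub>R x)" using min[OF yt] unfolding G_def .
    also have "\<dots> \<le> t * G y + (1-t) * G x - t * (1-t) * Q"
    proof -
      have eq: "(1/\<eta>) * (t * Rreg y + (1-t) * Rreg x - (1/2 * t * (1-t)) * (normdH (y - x))^2)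
          = t * ((1/\<eta>) * Rreg y) + (1-t) * ((1/\<eta>) * Rreg x) - t * (1-t) * ((normdH (y - x))^2 / (2*\<eta>))"
        using eta by (simp add: field_simps)
      have eq2: "t * (inner y c + (1/\<eta>) * Rreg y) + (1-t) * (inner x c + (1/\<eta>) * Rreg x)
          = (t * inner y c + (1-t) * inner x c) + (t * ((1/\<eta>) * Rreg y) + (1-t) * ((1/\<eta>) * Rreg x))"
        by (simp add: algebra_simps)
      show ?thesis unfolding G_def Q_def eq2 using R' lin eq by linarith
    qed
    finally have "t * (G y - G x - (1-t) * Q) \<ge> 0" by (simp add: algebra_simps)
    then show ?thesis using t by (simp add: zero_le_mult_iff)
  qed
  have D0: "G y - G x \<ge> 0" using key[of 1] by simp
  have "G y - G x \<ge> Q"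
  proof (rule ccontr)
    assume "\<not> ?thesis"
    hence lt: "G y - G x < Q" by simp
    hence Qp: "Q > 0" using D0 by simp
    define t where "t = (Q - (G y - G x)) / (2 * Q)"
    have t: "0 < t" "t \<le> 1" unfolding t_def using lt Qp D0 by (auto simp: field_simps)
    have "(1 - t) * Q = (Q + (G y - G x)) / 2" unfolding t_def using Qp by (simp add: field_simps)
    then show False using key[OF t] lt by simp
  qed
  then show ?thesis unfolding G_def Q_def by simp
qed

lemma opnorm_le:
  fixes M :: "real^'d::finite^'d"
  assumes "\<And>j. l1norm (col M j) \<le> N"
  shows "opnorm11 M \<le> N"
  unfolding opnorm11_def
proof (rule cSup_least)
  have "l1norm (axis undefined (1::real) :: real^'d) = 1" unfolding l1norm_def axis_def by simp
  then show "{l1norm (M *v x) |x. l1norm x = 1} \<noteq> {}" by blast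
  fix r assume "r \<in> {l1norm (M *v x) |x. l1norm x = 1}"
  then obtain x where r: "r = l1norm (M *v x)" and x: "l1norm x = 1" by blast
  have "l1norm (M *v x) = (\<Sum>i\<in>UNIV. \<bar>\<Sum>j\<in>UNIV. M $ i $ j * x $ j\<bar>)" by (simp add: l1norm_def matrix_vector_mult_def)
  also have "\<dots> \<le> (\<Sum>i\<in>UNIV. \<Sum>j\<in>UNIV. \<bar>M $ i $ j\<bar> * \<bar>x $ j\<bar>)"
    by (rule sum_mono, rule order_trans[OF sum_abs]) (simp add: abs_mult)
  also have "\<dots> = (\<Sum>j\<in>UNIV. \<bar>x $ j\<bar> * l1norm (col M j))"
    by (subst sum.swap) (simp add: l1norm_def col_def sum_distrib_left mult.commute)
  also have "\<dots> \<le> (\<Sum>j\<in>UNIV. \<bar>x $ j\<bar> * N)" by (rule sum_mono, rule mult_left_mono) (use assms in auto)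
  also have "\<dots> = N" using x by (simp add: l1norm_def sum_distrib_right[symmetric])
  finally show "r \<le> N" using r by simp
qed

lemma normdH_minus: "normdH (x - y) = normdH (y - x)"
  by (simp add: normdH_def col_diff l1norm_def abs_minus_commute)

lemma normdH_nonneg: "normdH x \<ge> 0" unfolding normdH_def
  by (intro real_sqrt_ge_zero add_nonneg_nonneg zero_le_power2 sum_nonneg)

lemma l1_le_normdH: "l1norm (fst z) \<le> normdH z"
proof -
  have "l1norm (fst z) = sqrt ((l1norm (fst z))^2)" by (simp add: l1norm_def sum_nonneg)
  also have "\<dots> \<le> normdH z" unfolding normdH_def by (rule real_sqrt_le_mono) (simp add: sum_nonneg)
  finally show ?thesis .
qed

lemma col_le_normdH: "l1norm (col (snd z $ h) j) \<le> normdH z"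
proof -
  have "(l1norm (col (snd z $ h) j))^2 \<le> (\<Sum>j\<in>UNIV. (l1norm (col (snd z $ h) j))^2)"
    by (rule member_le_sum) auto
  also have "\<dots> \<le> (\<Sum>h\<in>UNIV. \<Sum>j\<in>UNIV. (l1norm (col (snd z $ h) j))\<^sup>2)"
    by (rule member_le_sum) (auto intro: sum_nonneg)
  finally have a0: "(l1norm (col (snd z $ h) j))^2 \<le> (\<Sum>h\<in>UNIV. \<Sum>j\<in>UNIV. (l1norm (col (snd z $ h) j))\<^sup>2)" .
  have a: "(l1norm (col (snd z $ h) j))^2 \<le> (l1norm (fst z))\<^sup>2 + (\<Sum>h\<in>UNIV. \<Sum>j\<in>UNIV. (l1norm (col (snd z $ h) j))\<^sup>2)"
    using a0 zero_le_power2[of "l1norm (fst z)"] by linarith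
  have "l1norm (col (snd z $ h) j) = sqrt ((l1norm (col (snd z $ h) j))^2)" by (simp add: l1norm_def sum_nonneg)
  also have "\<dots> \<le> normdH z" unfolding normdH_def by (rule real_sqrt_le_mono[OF a])
  finally show ?thesis .
qed

lemma Rreg_bounds:
  fixes z :: "('d::finite, 'h::finite) point"
  assumes a0: "0 \<le> a" and b1: "b \<le> 1" and z: "z \<in> Xdom a b"
  shows "Rreg z \<le> 0" "- Rreg z \<le> (1 + real CARD('h) * real CARD('d)) * ln (CARD('d) + 1)"
proof -
  note bz = Xdom_blocks[OF a0 b1 z]
  have e1: "0 \<le> Ent (fst z)" "Ent (fst z) \<le> ln (CARD('d) + 1)" using Ent_bounds[of "fst z"] bz by auto
  have e2: "0 \<le> Ent (col (snd z $ h) j)" "Ent (col (snd z $ h) j) \<le> ln (CARD('d) + 1)" for h j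
    using Ent_bounds[of "col (snd z $ h) j"] Xdom_blocks(3,4)[OF a0 b1 z, of h j] by auto
  have "0 \<le> (\<Sum>h\<in>UNIV. \<Sum>j\<in>UNIV. Ent (col (snd z $ h) j))" using e2 by (simp add: sum_nonneg)
  then show "Rreg z \<le> 0" unfolding Rreg_def using e1 by simp
  have "(\<Sum>h\<in>UNIV. \<Sum>j\<in>UNIV. Ent (col (snd z $ h) j)) \<le> (\<Sum>h\<in>(UNIV::'h set). \<Sum>j\<in>(UNIV::'d set). ln (CARD('d) + 1))"
    by (intro sum_mono e2)
  also have "\<dots> = real CARD('h) * real CARD('d) * ln (CARD('d) + 1)" by simp
  finally show "- Rreg z \<le> (1 + real CARD('h) * real CARD('d)) * ln (CARD('d) + 1)"
    unfolding Rreg_def using e1 by (simp add: algebra_simps)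
qed

theorem corollary1:
  fixes ell :: "nat \<Rightarrow> ('d::finite, 'h::finite) point \<Rightarrow> real"
    and z g :: "nat \<Rightarrow> ('d, 'h) point"
    and a b L :: real and T :: nat
  assumes d2: "CARD('d) \<ge> 2"
    and ab: "0 \<le> a" "a \<le> b" "b \<le> 1"
    and L: "L > 0" and T: "T \<ge> 1"
    and cvx: "\<And>t. t \<in> {1..T} \<Longrightarrow> convex_on (Xdom a b) (ell t)"
    and lip: "\<And>t x y. t \<in> {1..T} \<Longrightarrow> x \<in> Xdom a b \<Longrightarrow> y \<in> Xdom a b \<Longrightarrow>
                \<bar>ell t x - ell t y\<bar> \<le> L * normdH (x - y)"
    and iter: "\<And>t. t \<in> {1..T} \<Longrightarrow>
                lazy_md_iterate (Xdom a b) (sqrt (2 * CARD('d) * CARD('h) * ln (CARD('d))) / (L * sqrt T)) g t (z t)"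
    and subgrad: "\<And>t y. t \<in> {1..T} \<Longrightarrow> y \<in> Xdom a b \<Longrightarrow>
                ell t y \<ge> ell t (z t) + inner (g t) (y - z t)"
    and grad_dual: "\<And>t w. t \<in> {1..T} \<Longrightarrow> \<bar>inner (g t) w\<bar> \<le> L * normdH w"
  shows "(\<forall>y\<in>Xdom a b. (\<Sum>t\<in>{1..T}. ell t (z t)) - (\<Sum>t\<in>{1..T}. ell t y)
            \<le> L * sqrt (32 * CARD('d) * CARD('h) * ln (CARD('d)) * T))
       \<and> (\<forall>t\<in>{1..T-1}.
            l1norm (fst (z t) - fst (z (t+1))) \<le> sqrt (2 * CARD('d) * CARD('h) * ln (CARD('d))) / sqrt T
          \<and> (\<forall>h. opnorm11 (snd (z t) $ h - snd (z (t+1)) $ h)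
                 \<le> sqrt (2 * CARD('d) * CARD('h) * ln (CARD('d))) / sqrt T))"
proof -
  define d where "d = real CARD('d)"
  define H where "H = real CARD('h)"
  define K where "K = sqrt (2 * CARD('d) * CARD('h) * ln (CARD('d)))"
  define \<eta> where "\<eta> = K / (L * sqrt T)"
  define \<beta> where "\<beta> = K / sqrt T"
  have d2': "d \<ge> 2" unfolding d_def using d2 by simp
  have H1: "H \<ge> 1" unfolding H_def by simp
  have lnd: "ln d > 0" using d2' by simp
  have K2: "K^2 = 2 * d * H * ln d" unfolding K_def d_def H_def using lnd d2' H1 by (simp add: d_def H_def)
  have Kp: "K > 0" unfolding K_def using lnd d2' H1 by (simp add: d_def H_def)
  have Tp: "sqrt T > 0" using T by simp
  have etap: "\<eta> > 0" unfolding \<eta>_def using Kp L Tp by simp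
  have etaL: "\<eta> * L = \<beta>" unfolding \<eta>_def \<beta>_def using L by simp
  have a0: "0 \<le> a" and b1: "b \<le> 1" using ab by auto
  define c where "c t = (\<Sum>s\<in>{1..<t}. g s)" for t
  define F where "F t y = inner y (c t) + (1/\<eta>) * Rreg y" for t y
  have zX: "z t \<in> Xdom a b" if "t \<in> {1..T}" for t
    using iter[OF that] unfolding lazy_md_iterate_def by blast
  have zmin: "F t (z t) \<le> F t y" if "t \<in> {1..T}" "y \<in> Xdom a b" for t y
    using iter[OF that(1)] that(2) unfolding lazy_md_iterate_def F_def c_def K_def[symmetric] \<eta>_def[symmetric]
    by (simp add: inner_sum_right)
  have MS: "F t (z t) + (normdH (y - z t))^2 / (2*\<eta>) \<le> F t y" if "t \<in> {1..T}" "y \<in> Xdom a b" for t y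
    unfolding F_def by (rule min_sc[OF a0 b1 etap zX[OF that(1)] that(2)]) (use zmin[OF that(1)] in \<open>simp add: F_def\<close>)
  have Fstep: "F (Suc t) y = F t y + inner y (g t)" if "t \<ge> 1" for t y
    unfolding F_def c_def using that by (simp add: sum.atLeastLessThan_Suc inner_add_right)
  have stab: "normdH (z t - z (t+1)) \<le> \<beta>" if t: "t \<in> {1..T-1}" for t
  proof -
    have t1: "t \<in> {1..T}" "Suc t \<in> {1..T}" using t T by auto
    define N where "N = normdH (z t - z (t+1))"
    have N0: "N \<ge> 0" unfolding N_def by (rule normdH_nonneg)
    have A: "F t (z t) + N^2 / (2*\<eta>) \<le> F t (z (Suc t))"
      using MS[OF t1(1) zX[OF t1(2)]] normdH_minus[of "z (Suc t)" "z t"] unfolding N_def by simp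
    have B: "F (Suc t) (z (Suc t)) + N^2 / (2*\<eta>) \<le> F (Suc t) (z t)"
      using MS[OF t1(2) zX[OF t1(1)]] unfolding N_def by simp
    have "N^2 / \<eta> \<le> inner (z t) (g t) - inner (z (Suc t)) (g t)"
      using A B Fstep[of t "z t"] Fstep[of t "z (Suc t)"] t by simp
    also have "\<dots> = inner (g t) (z t - z (t+1))" by (simp add: inner_diff_right inner_commute)
    also have "\<dots> \<le> L * N" unfolding N_def using grad_dual[OF t1(1)] by (simp add: abs_le_iff)
    finally have "N^2 \<le> \<eta> * L * N" using etap by (simp add: field_simps)
    hence "N * (N - \<eta> * L) \<le> 0" by (simp add: power2_eq_square algebra_simps)
    hence "N \<le> \<eta> * L" using N0 by (cases "N = 0") (auto simp: mult_le_0_iff etap L less_imp_le)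
    then show ?thesis unfolding N_def etaL .
  qed
  have part2: "\<forall>t\<in>{1..T-1}.
            l1norm (fst (z t) - fst (z (t+1))) \<le> sqrt (2 * CARD('d) * CARD('h) * ln (CARD('d))) / sqrt T
          \<and> (\<forall>h. opnorm11 (snd (z t) $ h - snd (z (t+1)) $ h)
                 \<le> sqrt (2 * CARD('d) * CARD('h) * ln (CARD('d))) / sqrt T)"
  proof (intro ballI conjI allI)
    fix t assume t: "t \<in> {1..T-1}"
    show "l1norm (fst (z t) - fst (z (t+1))) \<le> sqrt (2 * CARD('d) * CARD('h) * ln (CARD('d))) / sqrt T"
      using l1_le_normdH[of "z t - z (t+1)"] stab[OF t] unfolding K_def[symmetric] \<beta>_def[symmetric] by simp
    fix h
    show "opnorm11 (snd (z t) $ h - snd (z (t+1)) $ h) \<le> sqrt (2 * CARD('d) * CARD('h) * ln (CARD('d))) / sqrt T"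
      unfolding K_def[symmetric] \<beta>_def[symmetric]
      by (rule opnorm_le) (rule order_trans[OF _ stab[OF t]], use col_le_normdH[of "z t - z (t+1)" h] in simp)
  qed
  have BTL: "n \<ge> 1 \<Longrightarrow> n \<le> T \<Longrightarrow> (\<Sum>t\<in>{1..<n}. inner (z (Suc t)) (g t)) \<le> F n (z n) - (1/\<eta>) * Rreg (z 1)" for n
  proof (induction n)
    case 0 then show ?case by simp
  next
    case (Suc n)
    show ?case
    proof (cases "n = 0")
      case True then show ?thesis by (simp add: F_def c_def)
    next
      case False
      hence n1: "n \<ge> 1" "n \<le> T" using Suc.prems by auto
      have "(\<Sum>t\<in>{1..<Suc n}. inner (z (Suc t)) (g t)) = (\<Sum>t\<in>{1..<n}. inner (z (Suc t)) (g t)) + inner (z (Suc n)) (g n)"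
        using n1 by (simp add: sum.atLeastLessThan_Suc)
      also have "\<dots> \<le> F n (z n) - (1/\<eta>) * Rreg (z 1) + inner (z (Suc n)) (g n)" using Suc.IH[OF n1] by simp
      also have "\<dots> \<le> F n (z (Suc n)) - (1/\<eta>) * Rreg (z 1) + inner (z (Suc n)) (g n)"
        using zmin[of n "z (Suc n)"] zX[of "Suc n"] n1 Suc.prems by simp
      also have "\<dots> = F (Suc n) (z (Suc n)) - (1/\<eta>) * Rreg (z 1)" using Fstep[OF n1(1)] by simp
      finally show ?thesis .
    qed
  qed
  have part1: "\<forall>y\<in>Xdom a b. (\<Sum>t\<in>{1..T}. ell t (z t)) - (\<Sum>t\<in>{1..T}. ell t y)
            \<le> L * sqrt (32 * CARD('d) * CARD('h) * ln (CARD('d)) * T)"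
  proof
    fix y :: "('d, 'h) point" assume y: "y \<in> Xdom a b"
    define NT where "NT = normdH (y - z T)"
    have TT: "T \<in> {1..T}" using T by simp
    have s1: "(\<Sum>t\<in>{1..T}. ell t (z t)) - (\<Sum>t\<in>{1..T}. ell t y) \<le> (\<Sum>t\<in>{1..T}. inner (g t) (z t - y))"
      unfolding sum_subtractf[symmetric]
      by (rule sum_mono) (use subgrad[OF _ y] in \<open>force simp: inner_diff_right\<close>)
    have s2: "{1..T} = insert T {1..<T}" using T by auto
    have s3: "(\<Sum>t\<in>{1..T}. inner (g t) (z t - y)) = (\<Sum>t\<in>{1..<T}. inner (g t) (z t - y)) + inner (g T) (z T - y)"
      unfolding s2 by simp
    have "(\<Sum>t\<in>{1..<T}. inner (g t) (z t - y)) = (\<Sum>t\<in>{1..<T}. inner (g t) (z t - z (Suc t)) + inner (z (Suc t)) (g t) - inner y (g t))"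
      by (rule sum.cong) (simp_all add: inner_diff_right inner_commute)
    also have "\<dots> = (\<Sum>t\<in>{1..<T}. inner (g t) (z t - z (Suc t))) + (\<Sum>t\<in>{1..<T}. inner (z (Suc t)) (g t)) - inner y (c T)"
      unfolding c_def by (simp add: sum.distrib sum_subtractf inner_sum_right)
    finally have s4: "(\<Sum>t\<in>{1..<T}. inner (g t) (z t - y)) = (\<Sum>t\<in>{1..<T}. inner (g t) (z t - z (Suc t))) + (\<Sum>t\<in>{1..<T}. inner (z (Suc t)) (g t)) - inner y (c T)" .
    have SA: "(\<Sum>t\<in>{1..<T}. inner (g t) (z t - z (Suc t))) \<le> real (T - 1) * (L * \<beta>)"
    proof -
      have "(\<Sum>t\<in>{1..<T}. inner (g t) (z t - z (Suc t))) \<le> real (card {1..<T}) * (L * \<beta>)"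
      proof (rule sum_bounded_above)
        fix t assume t: "t \<in> {1..<T}"
        hence t1: "t \<in> {1..T}" "t \<in> {1..T-1}" by auto
        have "inner (g t) (z t - z (Suc t)) \<le> L * normdH (z t - z (Suc t))"
          using grad_dual[OF t1(1)] by (simp add: abs_le_iff)
        also have "\<dots> \<le> L * \<beta>" using stab[OF t1(2)] L by simp
        finally show "inner (g t) (z t - z (Suc t)) \<le> L * \<beta>" .
      qed
      then show ?thesis by simp
    qed
    have SB: "(\<Sum>t\<in>{1..<T}. inner (z (Suc t)) (g t)) \<le> F T (z T) - (1/\<eta>) * Rreg (z 1)"
      using BTL[of T] T by simp
    have MT: "F T (z T) + NT^2 / (2*\<eta>) \<le> inner y (c T) + (1/\<eta>) * Rreg y"
      using MS[OF TT y] unfolding NT_def F_def .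
    have last: "inner (g T) (z T - y) \<le> L * NT"
      using grad_dual[OF TT, of "z T - y"] normdH_minus[of "z T" y] unfolding NT_def by (simp add: abs_le_iff)
    have quad: "L * NT - NT^2 / (2*\<eta>) \<le> \<eta> * L^2 / 2"
    proof -
      have "0 \<le> (NT - \<eta> * L)^2" by simp
      hence "2 * \<eta> * (L * NT) - NT^2 \<le> \<eta>^2 * L^2" by (simp add: power2_eq_square algebra_simps)
      hence "(2 * \<eta> * (L * NT) - NT^2) / (2 * \<eta>) \<le> \<eta>^2 * L^2 / (2 * \<eta>)"
        using etap by (simp add: divide_right_mono)
      then show ?thesis using etap by (simp add: field_simps power2_eq_square)
    qed
    define D where "D = (1 + H * d) * ln (d + 1)"
    have Ry: "Rreg y \<le> 0" using Rreg_bounds(1)[OF a0 b1 y] .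
    have R1: "- Rreg (z 1) \<le> D" using Rreg_bounds(2)[OF a0 b1 zX[of 1]] T unfolding D_def d_def H_def by (simp add: add.commute)
    have RD: "(1/\<eta>) * Rreg y - (1/\<eta>) * Rreg (z 1) \<le> D / \<eta>"
    proof -
      have "Rreg y - Rreg (z 1) \<le> D" using Ry R1 by simp
      hence "(Rreg y - Rreg (z 1)) / \<eta> \<le> D / \<eta>" using etap by (simp add: divide_right_mono)
      then show ?thesis by (simp add: diff_divide_distrib)
    qed
    have reg: "(\<Sum>t\<in>{1..T}. ell t (z t)) - (\<Sum>t\<in>{1..T}. ell t y) \<le> real (T - 1) * (L * \<beta>) + D / \<eta> + \<eta> * L^2 / 2"
      using s1 s3 s4 SA SB MT last quad RD by linarith
    have Dle: "D \<le> 2 * K^2"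
    proof -
      have "1 * 1 \<le> H * d" by (rule mult_mono) (use H1 d2' in auto)
      hence "1 + H * d \<le> 2 * H * d" by simp
      moreover have "ln (d + 1) \<le> 2 * ln d"
      proof -
        have "2 * d \<le> d * d" by (rule mult_right_mono) (use d2' in auto)
        hence "d + 1 \<le> d * d" using d2' by linarith
        hence "ln (d + 1) \<le> ln (d * d)" using d2' by simp
        then show ?thesis using d2' by (simp add: ln_mult)
      qed
      moreover have "ln (d + 1) \<ge> 0" "1 + H * d \<ge> 0" using d2' H1 by auto
      ultimately have "D \<le> (2 * H * d) * (2 * ln d)" unfolding D_def by (intro mult_mono) auto
      then show ?thesis unfolding K2 by (simp add: algebra_simps)
    qed
    define s where "s = sqrt T"
    have s0: "s > 0" and ss: "s * s = T" unfolding s_def using T by auto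
    have eta_s: "\<eta> = K / (L * s)" unfolding \<eta>_def s_def ..
    have b: "\<beta> = \<eta> * L" using etaL by simp
    have t1: "real (T - 1) * (L * \<beta>) + \<eta> * L^2 / 2 \<le> K * L * s"
    proof -
      have "real (T - 1) * (L * \<beta>) + \<eta> * L^2 / 2 \<le> real T * (\<eta> * L^2)"
        using T etap L unfolding b by (simp add: of_nat_diff power2_eq_square algebra_simps)
      also have "\<dots> = K * L * s" unfolding eta_s using ss[symmetric] s0 L
        by (simp add: field_simps power2_eq_square)
      finally show ?thesis .
    qed
    have t2: "D / \<eta> \<le> 2 * K * L * s"
    proof -
      have "D / \<eta> = D * L * s / K" unfolding eta_s using Kp L s0 by (simp add: field_simps)
      also have "\<dots> \<le> 2 * K^2 * L * s / K"
        by (rule divide_right_mono, intro mult_right_mono Dle) (use L s0 Kp in auto)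
      also have "\<dots> = 2 * K * L * s" using Kp by (simp add: power2_eq_square)
      finally show ?thesis .
    qed
    have fin: "sqrt (32 * CARD('d) * CARD('h) * ln (CARD('d)) * T) = 4 * K * s"
    proof -
      have "(4 * K * s)^2 = 16 * K^2 * (s * s)" by (simp add: power2_eq_square)
      also have "\<dots> = 16 * (2 * d * H * ln d) * T" unfolding K2 ss ..
      also have "\<dots> = 32 * CARD('d) * CARD('h) * ln (CARD('d)) * T" unfolding d_def H_def by simp
      finally have "32 * CARD('d) * CARD('h) * ln (CARD('d)) * T = (4 * K * s)^2" by simp
      then show ?thesis using Kp s0 by simp
    qed
    show "(\<Sum>t\<in>{1..T}. ell t (z t)) - (\<Sum>t\<in>{1..T}. ell t y) \<le> L * sqrt (32 * CARD('d) * CARD('h) * ln (CARD('d)) * T)"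
    proof -
      have "0 \<le> K * L * s" using Kp L s0 by simp
      moreover have "L * (4 * K * s) = 4 * (K * L * s)" by simp
      ultimately show ?thesis unfolding fin using reg t1 t2 by linarith
    qed
  qed
  show ?thesis using part1 part2 by blast
qed

end
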